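(* Let $(a_n)$ be a sequence of positive reals with $1/a_n=O(1)$ as $n\to\infty$, and suppose that for some $\varepsilon>0$, $$\sum_{i=1}^{n}a_i=O\!\left(n(\ln n)^{1-\varepsilon}\right).$$ Then, as $n\to\infty$, $$\sum_{i=3}^{n}\frac{\ln\ln i}{\ln^2 i}\, i a_i\sim\frac{\ln\ln n}{\ln^2 n}\sum_{i=3}^{n} i a_i.$$ *)

theory Defs
  imports "HOL-Analysis.Analysis" "HOL-Library.Landau_Symbols"
begin

end

theory Submission
  imports Defs "HOL-Real_Asymp.Real_Asymp"
begin

lemma g_deriv: "(u::real) \<ge> 2 \<Longrightarrow> ((\<lambda>t. ln t / t^2) has_real_derivative (1/u * u^2 - ln u * (2 * u)) / (u^2)^2) (at u)"
      by (rule derivative_eq_intros refl | simp)+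
lemma ln2_ge: "ln (2::real) \<ge> 1/2"
proof -
  have "exp (1/2::real) \<le> 2"
  proof -
    have "exp (1/2::real) ^2 = exp (1/2 + 1/2)" unfolding power2_eq_square exp_add ..
    also have "\<dots> = exp 1" by simp
    also have "\<dots> \<le> 2^2" using exp_le by simp
    finally show ?thesis by (rule power2_le_imp_le) simp
  qed
  hence "ln (exp (1/2)) \<le> ln (2::real)" by (subst ln_le_cancel_iff) auto
  thus ?thesis by simp
qed
lemma g_anti:
  assumes "2 \<le> (s::real)" "s \<le> t"
  shows "ln t / t^2 \<le> ln s / s^2"
proof -
  have "\<And>u. s \<le> u \<Longrightarrow> u \<le> t \<Longrightarrow> \<exists>y. ((\<lambda>t. ln t / t^2) has_real_derivative y) (at u) \<and> y \<le> 0"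
  proof -
    fix u :: real assume u: "s \<le> u" "u \<le> t"
    hence u2: "u \<ge> 2" using assms by auto
    have d: "((\<lambda>t. ln t / t^2) has_real_derivative (1/u * u^2 - ln u * (2 * u)) / (u^2)^2) (at u)"
      by (rule g_deriv[OF u2])
    have "ln u \<ge> ln 2" using u2 by simp
    with ln2_ge have lu: "ln u \<ge> 1/2" by linarith
    have "1/u * u^2 - ln u * (2 * u) = u * (1 - 2 * ln u)" using u2 by (simp add: power2_eq_square algebra_simps)
    also have "\<dots> \<le> 0" using u2 lu by (intro mult_nonneg_nonpos) auto
    finally have X: "1/u * u^2 - ln u * (2 * u) \<le> 0" .
    have "(1/u * u^2 - ln u * (2 * u)) / (u^2)^2 \<le> 0" by (rule divide_nonpos_nonneg[OF X]) simp
    thus "\<exists>y. ((\<lambda>t. ln t / t^2) has_real_derivative y) (at u) \<and> y \<le> 0" using d by blast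
  qed
  from DERIV_nonpos_imp_nonincreasing[OF assms(2) this] show ?thesis by simp
qed

definition wf :: "real \<Rightarrow> real" where "wf x = ln (ln x) / (ln x)^2"

lemma exp2_le: "exp (2::real) \<le> 27"
proof -
  have "exp (2::real) = exp 1 * exp 1" by (simp add: exp_add[symmetric])
  also have "\<dots> \<le> 3 * 3" using exp_le by (intro mult_mono) auto
  finally show ?thesis by simp
qed

lemma wf_anti:
  assumes "27 \<le> x" "x \<le> y"
  shows "wf y \<le> wf x"
proof -
  have "ln (exp 2) \<le> ln (27::real)" using exp2_le by (subst ln_le_cancel_iff) auto
  hence "ln 27 \<ge> (2::real)" by simp
  moreover have "ln x \<ge> ln 27" using assms by simp
  moreover have "ln x \<le> ln y" using assms by simp
  ultimately show ?thesis unfolding wf_def by (intro g_anti) auto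
qed

lemma ln_ge1: "3 \<le> (x::real) \<Longrightarrow> 1 \<le> ln x"
proof -
  assume x: "3 \<le> x"
  have "exp 1 \<le> x" using exp_le x by linarith
  hence "ln (exp 1) \<le> ln x" using x by (subst ln_le_cancel_iff) auto
  thus ?thesis by simp
qed

lemma ln_ge2: "27 \<le> (x::real) \<Longrightarrow> 2 \<le> ln x"
proof -
  assume x: "27 \<le> x"
  have "exp 2 \<le> x" using exp2_le x by linarith
  hence "ln (exp 2) \<le> ln x" using x by (subst ln_le_cancel_iff) auto
  thus ?thesis by simp
qed

lemma wf_bounds:
  assumes "3 \<le> x"
  shows "0 \<le> wf x" "wf x \<le> 1"
proof -
  have l: "ln x \<ge> 1" using ln_ge1 assms .
  have "ln (ln x) \<le> ln x - 1" using l by (intro ln_le_minus_one) auto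
  moreover have "ln x \<le> ln x * ln x" using l by simp
  ultimately have h: "ln (ln x) \<le> (ln x)^2" unfolding power2_eq_square by linarith
  have "ln (ln x) \<ge> 0" using l by simp
  thus "0 \<le> wf x" unfolding wf_def by simp
  show "wf x \<le> 1" unfolding wf_def using h l by (auto simp: divide_le_eq_1)
qed

lemma wf_pos:
  assumes "27 \<le> x"
  shows "0 < wf x"
proof -
  have l: "ln x \<ge> 2" using ln_ge2 assms .
  hence "ln (ln x) > 0" by simp
  thus ?thesis using l unfolding wf_def by simp
qed

lemma sum_nat_lower: "n \<ge> 3 \<Longrightarrow> (\<Sum>i=3..n. real i) \<ge> real n ^ 2 / 4"
proof (induction n rule: nat_induct_at_least)
  case base then show ?case by (simp add: numeral_eq_Suc)
next
  case (Suc n)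
  have "(\<Sum>i=3..Suc n. real i) = (\<Sum>i=3..n. real i) + real (Suc n)"
    using Suc.hyps by (simp add: sum.cl_ivl_Suc)
  moreover have "real (Suc n) ^ 2 / 4 \<le> real n ^2 / 4 + real (Suc n)" unfolding of_nat_Suc power2_eq_square by (simp add: algebra_simps)
  ultimately show ?case using Suc.IH by linarith
qed

lemma split_sum:
  fixes f :: "nat \<Rightarrow> real"
  assumes "k \<le> Suc m" "m \<le> n"
  shows "(\<Sum>i=k..n. f i) = (\<Sum>i=k..m. f i) + (\<Sum>i=Suc m..n. f i)"
proof -
  have "{k..n} = {k..m} \<union> {Suc m..n}" using assms by auto
  thus ?thesis by (simp add: sum.union_disjoint)
qed

lemma ratio_aux:
  fixes R T \<eta> :: real
  assumes R: "R > 0" and h: "\<bar>T - R\<bar> < \<eta> * R"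
  shows "\<bar>T / R - 1\<bar> < \<eta>"
proof -
  have "T / R - 1 = (T - R) / R" using R by (simp add: diff_divide_distrib)
  hence "\<bar>T / R - 1\<bar> = \<bar>T - R\<bar> / R" using R by simp
  also have "\<dots> < \<eta>" using R h by (simp add: pos_divide_less_eq)
  finally show ?thesis .
qed

theorem lemma2:
  fixes a :: "nat \<Rightarrow> real" and \<epsilon> :: real
  assumes pos: "\<And>n. n \<ge> 1 \<Longrightarrow> a n > 0"
    and bdd: "(\<lambda>n. 1 / a n) \<in> O(\<lambda>_. 1)"
    and eps: "\<epsilon> > 0"
    and sum_bound: "(\<lambda>n. \<Sum>i=1..n. a i) \<in> O(\<lambda>n. real n * ln (real n) powr (1 - \<epsilon>))"
  shows "(\<lambda>n. \<Sum>i=3..n. ln (ln (real i)) / (ln (real i))^2 * (real i * a i))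
           \<sim>[at_top] (\<lambda>n. ln (ln (real n)) / (ln (real n))^2 * (\<Sum>i=3..n. real i * a i))"
proof -
  define S where "S = (\<lambda>n. \<Sum>i=3..n. real i * a i)"
  define T where "T = (\<lambda>n. \<Sum>i=3..n. wf (real i) * (real i * a i))"
  have tnn: "real i * a i \<ge> 0" if "i \<ge> 3" for i using pos[of i] that by simp
  obtain C where C: "C > 0" "eventually (\<lambda>n. norm (1 / a n) \<le> C * norm (1::real)) at_top"
    using bdd by (auto elim!: landau_o.bigE)
  then obtain N0 where N0: "\<And>n. n \<ge> N0 \<Longrightarrow> norm (1 / a n) \<le> C"
    by (auto simp: eventually_at_top_linorder)
  define c where "c = min (1/C) (Min (a ` {1..N0+1}))"
  have "Min (a ` {1..N0+1}) > 0" using pos by (subst Min_gr_iff) auto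
  hence c0: "c > 0" using C unfolding c_def by auto
  have alow: "c \<le> a i" if "i \<ge> 1" for i
  proof (cases "i \<ge> N0")
    case True
    have ai: "a i > 0" using pos that by auto
    hence "1 / a i \<le> C" using N0[OF True] by simp
    hence "1 / C \<le> a i" using ai C(1) by (simp add: field_simps)
    thus ?thesis unfolding c_def by linarith
  next
    case False
    hence "a i \<in> a ` {1..N0+1}" using that by auto
    hence "Min (a ` {1..N0+1}) \<le> a i" by (intro Min_le) auto
    thus ?thesis unfolding c_def by linarith
  qed
  have S_lower: "S n \<ge> c * real n ^ 2 / 4" if "n \<ge> 3" for n
  proof -
    have "(\<Sum>i=3..n. c * real i) \<le> S n" unfolding S_def
      using alow by (intro sum_mono) (auto intro!: mult_left_mono simp: mult.commute)
    moreover have "(\<Sum>i=3..n. c * real i) = c * (\<Sum>i=3..n. real i)" by (simp add: sum_distrib_left)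
    moreover have "c * (\<Sum>i=3..n. real i) \<ge> c * (real n ^ 2 / 4)"
      using sum_nat_lower[OF that] c0 by (intro mult_left_mono) auto
    ultimately show ?thesis by simp
  qed
  obtain K where K: "K > 0" "eventually (\<lambda>n. norm (\<Sum>i=1..n. a i) \<le> K * norm (real n * ln (real n) powr (1 - \<epsilon>))) at_top"
    using sum_bound by (auto elim!: landau_o.bigE)
  then obtain N1' where N1': "\<And>n. n \<ge> N1' \<Longrightarrow> norm (\<Sum>i=1..n. a i) \<le> K * norm (real n * ln (real n) powr (1 - \<epsilon>))"
    by (auto simp: eventually_at_top_linorder)
  define N1 where "N1 = max N1' 3"
  have asum: "(\<Sum>i=1..n. a i) \<le> K * real n * ln (real n)" if "n \<ge> N1" for n
  proof -
    have n3: "real n \<ge> 3" using that unfolding N1_def by auto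
    have l1: "ln (real n) \<ge> 1" using ln_ge1[OF n3] .
    have "(\<Sum>i=1..n. a i) \<le> norm (\<Sum>i=1..n. a i)" by simp
    also have "\<dots> \<le> K * norm (real n * ln (real n) powr (1 - \<epsilon>))" using N1' that unfolding N1_def by auto
    also have "norm (real n * ln (real n) powr (1 - \<epsilon>)) = real n * ln (real n) powr (1 - \<epsilon>)"
      by simp
    also have "ln (real n) powr (1 - \<epsilon>) \<le> ln (real n) powr 1" using eps l1 by (intro powr_mono) auto
    hence "K * (real n * ln (real n) powr (1 - \<epsilon>)) \<le> K * (real n * ln (real n))"
      using K(1) l1 by (intro mult_left_mono) auto
    finally show ?thesis by (simp add: mult.assoc)
  qed
  have S_mono: "S m \<le> S n" if "m \<le> n" for m n
    unfolding S_def using that tnn by (intro sum_mono2) auto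
  have S_nonneg: "S n \<ge> 0" for n unfolding S_def using tnn by (intro sum_nonneg) auto
  have S_up1: "S m \<le> real m * (\<Sum>i=1..m. a i)" for m
  proof -
    have "S m \<le> (\<Sum>i=3..m. real m * a i)" unfolding S_def
      using pos[THEN less_imp_le] by (intro sum_mono mult_right_mono) auto
    also have "\<dots> = real m * (\<Sum>i=3..m. a i)" by (simp add: sum_distrib_left)
    also have "(\<Sum>i=3..m. a i) \<le> (\<Sum>i=1..m. a i)" using pos[THEN less_imp_le] by (intro sum_mono2) auto
    hence "real m * (\<Sum>i=3..m. a i) \<le> real m * (\<Sum>i=1..m. a i)" by (intro mult_left_mono) auto
    finally show ?thesis .
  qed
  define B where "B = S N1"
  have S_upper: "S m \<le> B + K * real m ^ 2 * ln (real m)" if "m \<ge> 3" for m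
  proof -
    have lm: "ln (real m) \<ge> 0" using that by simp
    have Kp: "K * real m ^ 2 * ln (real m) \<ge> 0" using K(1) lm by simp
    show ?thesis
    proof (cases "m \<ge> N1")
      case True
      have "S m \<le> real m * (K * real m * ln (real m))"
        using S_up1[of m] asum[OF True] by (meson mult_left_mono of_nat_0_le_iff order_trans)
      also have "\<dots> = K * real m ^ 2 * ln (real m)" by (simp add: power2_eq_square)
      finally show ?thesis using S_nonneg[of N1] unfolding B_def by linarith
    next
      case False
      then show ?thesis using S_mono[of m N1] Kp unfolding B_def by linarith
    qed
  qed
  have lim: "((\<lambda>n. T n / (wf (real n) * S n)) \<longlongrightarrow> 1) at_top"
  proof (rule tendstoI)
    fix \<eta> :: real assume \<eta>: "\<eta> > 0"
    define e where "e = \<eta> / 3"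
    have e0: "e > 0" using \<eta> unfolding e_def by simp
    have "filterlim (\<lambda>x::real. x / (ln x)^2) at_top at_top" by real_asymp
    hence ev1: "eventually (\<lambda>x::real. 27 \<le> x / (ln x)^2) at_top" by (simp add: filterlim_at_top)
    have r1: "((\<lambda>x. wf (x / (ln x)^2) / wf x) \<longlongrightarrow> 1) at_top" unfolding wf_def by real_asymp
    have ev2': "eventually (\<lambda>x. wf (x / (ln x)^2) / wf x < 1 + e) at_top"
      using order_tendstoD(2)[OF r1, of "1+e"] e0 by simp
    have ev27: "eventually (\<lambda>x::real. 27 \<le> x) at_top" by (rule eventually_ge_at_top)
    have ev2: "eventually (\<lambda>x. wf (x / (ln x)^2) < (1 + e) * wf x) at_top"
      using ev2' ev27
    proof eventually_elim
      case (elim x)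
      have "wf x > 0" using wf_pos[of x] elim by simp
      thus ?case using elim(1) by (simp add: field_simps)
    qed
    have o1: "(\<lambda>x::real. 1) \<in> o(\<lambda>x. wf x * x^2)" unfolding wf_def by real_asymp
    have o2: "(\<lambda>x::real. x^2 / (ln x)^3) \<in> o(\<lambda>x. wf x * x^2)" unfolding wf_def by real_asymp
    have o3: "(\<lambda>x::real. B * 1 + K * (x^2 / (ln x)^3)) \<in> o(\<lambda>x. wf x * x^2)"
      by (intro sum_in_smallo) (simp_all only: cmult_in_smallo_iff o1 o2 simp_thms)
    have ev3': "eventually (\<lambda>x. norm (B * 1 + K * (x^2 / (ln x)^3)) \<le> (e * c / 4) * norm (wf x * x^2)) at_top"
      using landau_o.smallD[OF o3, of "e * c / 4"] e0 c0 by simp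
    have ev3: "eventually (\<lambda>x. B + K * (x^2 / (ln x)^3) \<le> e * (c / 4) * (wf x * x^2)) at_top"
      using ev3' ev27
    proof eventually_elim
      case (elim x)
      have "wf x > 0" using wf_pos[of x] elim by simp
      hence "norm (wf x * x^2) = wf x * x^2" by simp
      hence "norm (B * 1 + K * (x^2 / (ln x)^3)) \<le> (e * c / 4) * (wf x * x^2)" using elim(1) by simp
      moreover have "B + K * (x^2 / (ln x)^3) \<le> norm (B * 1 + K * (x^2 / (ln x)^3))" by simp
      ultimately have "B * 1 + K * (x^2 / (ln x)^3) \<le> (e * c / 4) * (wf x * x^2)" by linarith
      thus ?case by simp
    qed
    have evR: "eventually (\<lambda>x::real. 27 \<le> x / (ln x)^2 \<and> wf (x / (ln x)^2) < (1 + e) * wf x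
       \<and> B + K * (x^2 / (ln x)^3) \<le> e * (c / 4) * (wf x * x^2) \<and> 27 \<le> x) at_top"
      using ev1 ev2 ev3 ev27 by eventually_elim auto
    have evN: "eventually (\<lambda>n. 27 \<le> real n / (ln (real n))^2 \<and> wf (real n / (ln (real n))^2) < (1 + e) * wf (real n)
       \<and> B + K * (real n^2 / (ln (real n))^3) \<le> e * (c / 4) * (wf (real n) * real n^2) \<and> 27 \<le> real n) at_top"
      using filterlim_real_sequentially[unfolded filterlim_iff] evR by blast
    show "eventually (\<lambda>n. dist (T n / (wf (real n) * S n)) 1 < \<eta>) at_top"
      using evN
    proof eventually_elim
      case (elim n)
      define x where "x = real n"
      define q where "q = x / (ln x)^2"
      define m where "m = nat \<lfloor>q\<rfloor>"
      have x27: "27 \<le> x" and q27: "27 \<le> q" and wq: "wf q < (1 + e) * wf x"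
        and F: "B + K * (x^2 / (ln x)^3) \<le> e * (c / 4) * (wf x * x^2)"
        using elim unfolding x_def q_def by auto
      have lx: "ln x > 1" using ln_ge2[of x] x27 by simp
      have qx: "q \<le> x" unfolding q_def using lx x27
        by (simp add: divide_le_eq)
      have mq: "real m \<le> q" "q < real m + 1" unfolding m_def using q27
        by (simp_all add: of_nat_nat)
      have m27: "m \<ge> 27" using mq q27 by linarith
      have mn: "m \<le> n" using mq qx unfolding x_def by linarith
      have n3: "n \<ge> 3" using mn m27 by simp
      define S' where "S' = (\<Sum>i=Suc m..n. real i * a i)"
      define A where "A = (\<Sum>i=3..m. wf (real i) * (real i * a i))"
      define Bt where "Bt = (\<Sum>i=Suc m..n. wf (real i) * (real i * a i))"
      have Tn: "T n = A + Bt" unfolding T_def A_def Bt_def using m27 mn by (intro split_sum) auto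
      have Sn: "S n = S m + S'" unfolding S_def S'_def using m27 mn by (intro split_sum) auto
      have wx: "0 < wf x" "wf x \<le> 1" using wf_bounds[of x] wf_pos[of x] x27 by auto
      have A0: "0 \<le> A" unfolding A_def using tnn wf_bounds pos[THEN less_imp_le]
        by (intro sum_nonneg mult_nonneg_nonneg) auto
      have A1: "A \<le> S m" unfolding A_def S_def
      proof (intro sum_mono)
        fix i assume "i \<in> {3..m}"
        hence "real i \<ge> 3" "real i * a i \<ge> 0" using tnn by auto
        thus "wf (real i) * (real i * a i) \<le> real i * a i"
          using wf_bounds(2)[of "real i"] mult_left_le_one_le[of "real i * a i" "wf (real i)"] wf_bounds(1)[of "real i"] by simp
      qed
      have Bt1: "wf x * S' \<le> Bt" unfolding Bt_def S'_def sum_distrib_left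
      proof (intro sum_mono)
        fix i assume i: "i \<in> {Suc m..n}"
        hence "27 \<le> real i" "real i \<le> x" "real i * a i \<ge> 0" using tnn m27 unfolding x_def by auto
        thus "wf x * (real i * a i) \<le> wf (real i) * (real i * a i)"
          using wf_anti[of "real i" x] by (intro mult_right_mono) auto
      qed
      have Bt2: "Bt \<le> (1 + e) * wf x * S'" unfolding Bt_def S'_def sum_distrib_left
      proof (intro sum_mono)
        fix i assume i: "i \<in> {Suc m..n}"
        hence "q \<le> real i" "real i * a i \<ge> 0" using tnn m27 mq by auto
        hence "wf (real i) \<le> wf q" using wf_anti[of q "real i"] q27 by auto
        thus "wf (real i) * (real i * a i) \<le> (1 + e) * wf x * (real i * a i)"
          using wq \<open>real i * a i \<ge> 0\<close> by (intro mult_right_mono) auto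
      qed
      have S'0: "S' \<ge> 0" "S' \<le> S n" using Sn S_nonneg[of m] unfolding S'_def using tnn m27
        by (auto intro!: sum_nonneg)
      have Sm: "S m \<le> B + K * (x^2 / (ln x)^3)"
      proof -
        have "S m \<le> B + K * real m ^ 2 * ln (real m)" using S_upper m27 by simp
        also have "K * real m ^ 2 * ln (real m) \<le> K * q^2 * ln x"
        proof -
          have "real m ^ 2 \<le> q ^ 2" using mq by (intro power_mono) auto
          moreover have "ln (real m) \<le> ln x" using mn m27 unfolding x_def by simp
          moreover have "ln (real m) \<ge> 0" using m27 by simp
          ultimately show ?thesis using K(1) by (intro mult_mono mult_left_mono) auto
        qed
        also have "K * q^2 * ln x = K * (x^2 / (ln x)^3)" unfolding q_def using lx
          by (simp add: power2_eq_square power3_eq_cube field_simps)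
        finally show ?thesis by simp
      qed
      have Sl: "c * x^2 / 4 \<le> S n" using S_lower[OF n3] unfolding x_def by simp
      have "e * (c / 4) * (wf x * x^2) = e * wf x * (c * x^2 / 4)" by simp
      also have "\<dots> \<le> e * wf x * S n" using Sl e0 wx by (intro mult_left_mono) auto
      finally have "e * (c / 4) * (wf x * x^2) \<le> e * wf x * S n" .
      hence SmR: "S m \<le> e * (wf x * S n)" using Sm F by (simp only: mult.assoc)
      have "c * x^2 / 4 > 0" using c0 x27 by simp
      hence "S n > 0" using Sl by linarith
      hence Rpos: "wf x * S n > 0" using wx by simp
      have eS': "e * (wf x * S') \<le> e * (wf x * S n)" using S'0 wx e0 by (intro mult_left_mono) auto
      have wSm: "wf x * S m \<le> S m" using wx S_nonneg[of m] by (simp add: mult_left_le_one_le)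
      have wSm0: "wf x * S m \<ge> 0" using wx S_nonneg[of m] by simp
      have up: "T n - wf x * S n \<le> 2 * e * (wf x * S n)"
        using Tn Sn A1 Bt2 SmR eS' wSm0 by (simp add: algebra_simps)
      have lo: "T n - wf x * S n \<ge> - (e * (wf x * S n))"
        using Tn Sn A0 Bt1 SmR wSm by (simp add: algebra_simps)
      have "\<bar>T n - wf x * S n\<bar> < \<eta> * (wf x * S n)"
      proof -
        have P: "0 < \<eta> * (wf x * S n)" using Rpos \<eta> by simp
        have e1: "2 * e * (wf x * S n) = 2/3 * (\<eta> * (wf x * S n))" unfolding e_def by simp
        have e2: "e * (wf x * S n) = 1/3 * (\<eta> * (wf x * S n))" unfolding e_def by simp
        show ?thesis unfolding abs_less_iff using up lo P e1 e2 by linarith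
      qed
      hence "\<bar>T n / (wf x * S n) - 1\<bar> < \<eta>" using Rpos ratio_aux by blast
      thus ?case unfolding x_def dist_real_def .
    qed
  qed
  have "T \<sim>[at_top] (\<lambda>n. wf (real n) * S n)" by (rule asymp_equivI'[OF lim])
  thus ?thesis unfolding T_def S_def wf_def .
qed

end
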